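(* Let $(M,g)$ be an $n$-dimensional Lorentzian manifold and let $K_{ij}=Ag_{ij}+Bu_iu_j$ (with $u$ unit timelike, $B\neq0$) be a divergence-free conformal Killing tensor with acceleration-free velocity, $\dot u_j=0$, and with $\dot B$ vanishing nowhere. Then $\nabla_ju_k=H(g_{jk}+u_ju_k)$ and $\nabla_jH=-\dot H\,u_j$ with $H=\dot B/(2B)$; that is, $(M,g)$ is a generalized Robertson–Walker spacetime.
   Context: A symmetric tensor $K_{ij}$ is a conformal Killing tensor if $\nabla_iK_{jl}+\nabla_jK_{li}+\nabla_lK_{ij}=\eta_ig_{jl}+\eta_jg_{li}+\eta_lg_{ij}$ with $\eta_i=\frac{\nabla_iK+2\nabla_jK^j{}_i}{n+2}$, $K=g^{ij}K_{ij}$; divergence-free means $\nabla^jK_{jk}=0$. For a scalar $f$, $\dot f=u^k\nabla_kf$; $\dot u_j=u^k\nabla_ku_j$. A Lorentzian manifold is a generalized Robertson–Walker (GRW) spacetime if (covariant characterization, equivalent to the warped metric $ds^2=-dt^2+a(t)^2g^\star_{\mu\nu}(\mathbf x)dx^\mu dx^\nu$) it admits a unit timelike vector field $u$ and a scalar $H$ with $\nabla_ju_k=H(g_{jk}+u_ju_k)$ and $\nabla_jH=-\dot H\,u_j$. *)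

theory Defs
  imports "HOL-Analysis.Analysis"
begin

text \<open>Local coordinate setting: an open set U of R^n (index type 'n, n = CARD('n)).
  Tensors are given by their components in these coordinates.\<close>

definition pd :: "'n::finite \<Rightarrow> (real^'n \<Rightarrow> real) \<Rightarrow> real^'n \<Rightarrow> real" where
  "pd i f x = frechet_derivative f (at x) (axis i 1)"

fun iter_pd :: "'n::finite list \<Rightarrow> (real^'n \<Rightarrow> real) \<Rightarrow> real^'n \<Rightarrow> real" where
  "iter_pd [] f = f"
| "iter_pd (i # is) f = pd i (iter_pd is f)"

definition smooth_on :: "(real^'n::finite) set \<Rightarrow> (real^'n \<Rightarrow> real) \<Rightarrow> bool" where
  "smooth_on U f \<longleftrightarrow> (\<forall>is. \<forall>x\<in>U. iter_pd is f differentiable (at x))"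

definition lorentzian_metric :: "(real^'n::finite) set \<Rightarrow> (real^'n \<Rightarrow> real^'n^'n) \<Rightarrow> bool" where
  "lorentzian_metric U g \<longleftrightarrow>
     (\<forall>i j. smooth_on U (\<lambda>x. g x $ i $ j)) \<and>
     (\<forall>x\<in>U. transpose (g x) = g x \<and>
        (\<exists>(i0::'n) (P::real^'n^'n). invertible P \<and>
           transpose P ** g x ** P = (\<chi> i j. if i = j then (if i = i0 then -1 else 1) else 0)))"

definition ginv :: "(real^'n::finite \<Rightarrow> real^'n^'n) \<Rightarrow> real^'n \<Rightarrow> 'n \<Rightarrow> 'n \<Rightarrow> real" where
  "ginv g x i j = matrix_inv (g x) $ i $ j"

definition christoffel :: "(real^'n::finite \<Rightarrow> real^'n^'n) \<Rightarrow> 'n \<Rightarrow> 'n \<Rightarrow> 'n \<Rightarrow> real^'n \<Rightarrow> real" where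
  "christoffel g k i j x = (1/2) * (\<Sum>l\<in>UNIV. ginv g x k l *
      (pd i (\<lambda>y. g y $ j $ l) x + pd j (\<lambda>y. g y $ i $ l) x - pd l (\<lambda>y. g y $ i $ j) x))"

definition cov1 :: "(real^'n::finite \<Rightarrow> real^'n^'n) \<Rightarrow> (real^'n \<Rightarrow> real^'n) \<Rightarrow> 'n \<Rightarrow> 'n \<Rightarrow> real^'n \<Rightarrow> real" where
  "cov1 g w j k x = pd j (\<lambda>y. w y $ k) x - (\<Sum>l\<in>UNIV. christoffel g l j k x * w x $ l)"

definition cov2 :: "(real^'n::finite \<Rightarrow> real^'n^'n) \<Rightarrow> (real^'n \<Rightarrow> 'n \<Rightarrow> 'n \<Rightarrow> real) \<Rightarrow> 'n \<Rightarrow> 'n \<Rightarrow> 'n \<Rightarrow> real^'n \<Rightarrow> real" where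
  "cov2 g T a b c x = pd a (\<lambda>y. T y b c) x
      - (\<Sum>m\<in>UNIV. christoffel g m a b x * T x m c)
      - (\<Sum>m\<in>UNIV. christoffel g m a c x * T x b m)"

definition raise :: "(real^'n::finite \<Rightarrow> real^'n^'n) \<Rightarrow> (real^'n \<Rightarrow> real^'n) \<Rightarrow> 'n \<Rightarrow> real^'n \<Rightarrow> real" where
  "raise g u k x = (\<Sum>l\<in>UNIV. ginv g x k l * u x $ l)"

definition dotd :: "(real^'n::finite \<Rightarrow> real^'n^'n) \<Rightarrow> (real^'n \<Rightarrow> real^'n) \<Rightarrow> (real^'n \<Rightarrow> real) \<Rightarrow> real^'n \<Rightarrow> real" where
  "dotd g u f x = (\<Sum>k\<in>UNIV. raise g u k x * pd k f x)"

definition accel :: "(real^'n::finite \<Rightarrow> real^'n^'n) \<Rightarrow> (real^'n \<Rightarrow> real^'n) \<Rightarrow> 'n \<Rightarrow> real^'n \<Rightarrow> real" where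
  "accel g u j x = (\<Sum>k\<in>UNIV. raise g u k x * cov1 g u k j x)"

definition trace2 :: "(real^'n::finite \<Rightarrow> real^'n^'n) \<Rightarrow> (real^'n \<Rightarrow> 'n \<Rightarrow> 'n \<Rightarrow> real) \<Rightarrow> real^'n \<Rightarrow> real" where
  "trace2 g K x = (\<Sum>i\<in>UNIV. \<Sum>j\<in>UNIV. ginv g x i j * K x i j)"

definition eta :: "(real^'n::finite \<Rightarrow> real^'n^'n) \<Rightarrow> (real^'n \<Rightarrow> 'n \<Rightarrow> 'n \<Rightarrow> real) \<Rightarrow> 'n \<Rightarrow> real^'n \<Rightarrow> real" where
  "eta g K i x = (pd i (trace2 g K) x
      + 2 * (\<Sum>j\<in>UNIV. \<Sum>m\<in>UNIV. ginv g x j m * cov2 g K j m i x)) / (real CARD('n) + 2)"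

definition conformal_killing :: "(real^'n::finite) set \<Rightarrow> (real^'n \<Rightarrow> real^'n^'n) \<Rightarrow> (real^'n \<Rightarrow> 'n \<Rightarrow> 'n \<Rightarrow> real) \<Rightarrow> bool" where
  "conformal_killing U g K \<longleftrightarrow> (\<forall>x\<in>U. \<forall>i j l.
      cov2 g K i j l x + cov2 g K j l i x + cov2 g K l i j x
      = eta g K i x * g x $ j $ l + eta g K j x * g x $ l $ i + eta g K l x * g x $ i $ j)"

definition divergence_free :: "(real^'n::finite) set \<Rightarrow> (real^'n \<Rightarrow> real^'n^'n) \<Rightarrow> (real^'n \<Rightarrow> 'n \<Rightarrow> 'n \<Rightarrow> real) \<Rightarrow> bool" where
  "divergence_free U g K \<longleftrightarrow> (\<forall>x\<in>U. \<forall>k. (\<Sum>j\<in>UNIV. \<Sum>i\<in>UNIV. ginv g x j i * cov2 g K i j k x) = 0)"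

end

theory Submission
  imports Defs
begin



lemma pd_cong_open:
  assumes "open S" "x \<in> S" "\<And>y. y \<in> S \<Longrightarrow> f y = h y"
  shows "pd i f x = pd i h x"
proof -
  have "\<And>D. (f has_derivative D) (at x) \<longleftrightarrow> (h has_derivative D) (at x)"
    using has_derivative_transform_within_open assms by (metis)
  then show ?thesis unfolding pd_def frechet_derivative_def by simp
qed

lemma pd_has: "(f has_derivative D) (at x) \<Longrightarrow> pd i f x = D (axis i 1)"
  unfolding pd_def using frechet_derivative_at by metis

lemma has_pd: "f differentiable (at x) \<Longrightarrow> (f has_derivative frechet_derivative f (at x)) (at x)"
  using frechet_derivative_works by blast

lemma pd_add: "f differentiable (at x) \<Longrightarrow> h differentiable (at x) \<Longrightarrow>
   pd i (\<lambda>y. f y + h y) x = pd i f x + pd i h x"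
proof -
  assume a: "f differentiable (at x)" "h differentiable (at x)"
  have "((\<lambda>y. f y + h y) has_derivative (\<lambda>v. frechet_derivative f (at x) v + frechet_derivative h (at x) v)) (at x)"
    by (intro has_derivative_add has_pd a)
  from pd_has[OF this] show ?thesis unfolding pd_def .
qed

lemma pd_diff: "f differentiable (at x) \<Longrightarrow> h differentiable (at x) \<Longrightarrow>
   pd i (\<lambda>y. f y - h y) x = pd i f x - pd i h x"
proof -
  assume a: "f differentiable (at x)" "h differentiable (at x)"
  have "((\<lambda>y. f y - h y) has_derivative (\<lambda>v. frechet_derivative f (at x) v - frechet_derivative h (at x) v)) (at x)"
    by (intro has_derivative_diff has_pd a)
  from pd_has[OF this] show ?thesis unfolding pd_def .
qed

lemma pd_mult: "f differentiable (at x) \<Longrightarrow> h differentiable (at x) \<Longrightarrow>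
   pd i (\<lambda>y. f y * h y) x = f x * pd i h x + pd i f x * h x"
proof -
  assume a: "f differentiable (at x)" "h differentiable (at x)"
  have "((\<lambda>y. f y * h y) has_derivative (\<lambda>v. f x * frechet_derivative h (at x) v + frechet_derivative f (at x) v * h x)) (at x)"
    by (intro has_derivative_mult has_pd a)
  from pd_has[OF this] show ?thesis unfolding pd_def .
qed

lemma pd_const: "pd i (\<lambda>y. c) x = 0"
  using pd_has[OF has_derivative_const[of c "at x"]] by simp

lemma pd_sum: "(\<And>k. k \<in> S \<Longrightarrow> f k differentiable (at x)) \<Longrightarrow> finite S \<Longrightarrow>
   pd i (\<lambda>y. \<Sum>k\<in>S. f k y) x = (\<Sum>k\<in>S. pd i (f k) x)"
proof -
  assume a: "\<And>k. k \<in> S \<Longrightarrow> f k differentiable (at x)" "finite S"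
  have "((\<lambda>y. \<Sum>k\<in>S. f k y) has_derivative (\<lambda>v. \<Sum>k\<in>S. frechet_derivative (f k) (at x) v)) (at x)"
    by (rule has_derivative_sum) (use a has_pd in auto)
  then show ?thesis unfolding pd_def[of i "f _"] by (rule pd_has)
qed

lemma pd_divide: "f differentiable (at x) \<Longrightarrow> h differentiable (at x) \<Longrightarrow> h x \<noteq> 0 \<Longrightarrow>
   pd i (\<lambda>y. f y / h y) x = (pd i f x * h x - f x * pd i h x) / (h x * h x)"
proof -
  assume a: "f differentiable (at x)" "h differentiable (at x)" "h x \<noteq> 0"
  have "((\<lambda>y. f y / h y) has_derivative
     (\<lambda>v. - f x * (inverse (h x) * frechet_derivative h (at x) v * inverse (h x)) + frechet_derivative f (at x) v / h x)) (at x)"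
    by (rule has_derivative_divide) (use a has_pd in auto)
  from pd_has[OF this, of i] a show ?thesis unfolding pd_def
    by (simp add: field_simps)
qed

lemma smooth_diff0: "smooth_on U f \<Longrightarrow> x \<in> U \<Longrightarrow> f differentiable (at x)"
  unfolding smooth_on_def by (metis iter_pd.simps(1))
lemma smooth_diff1: "smooth_on U f \<Longrightarrow> x \<in> U \<Longrightarrow> pd i f differentiable (at x)"
  unfolding smooth_on_def by (metis iter_pd.simps)
lemma smooth_diff2: "smooth_on U f \<Longrightarrow> x \<in> U \<Longrightarrow> pd i (pd j f) differentiable (at x)"
  unfolding smooth_on_def by (metis iter_pd.simps)

lemma line_deriv:
  fixes F :: "real^'n::finite \<Rightarrow> real"
  assumes "F differentiable (at (p + s *\<^sub>R axis k 1))"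
  shows "((\<lambda>s. F (p + s *\<^sub>R axis k 1)) has_real_derivative pd k F (p + s *\<^sub>R axis k 1)) (at s)"
proof -
  let ?D = "frechet_derivative F (at (p + s *\<^sub>R axis k 1))"
  have l: "linear ?D" using linear_frechet_derivative[OF assms] .
  have d1: "((\<lambda>s. p + s *\<^sub>R axis k 1) has_derivative (\<lambda>s. s *\<^sub>R axis k 1)) (at s)"
    by (auto intro!: derivative_eq_intros)
  have "((\<lambda>s. F (p + s *\<^sub>R axis k 1)) has_derivative (\<lambda>t. ?D (t *\<^sub>R axis k 1))) (at s)"
    using has_derivative_compose[OF d1 has_pd[OF assms]] by (simp add: o_def)
  moreover have "(\<lambda>t. ?D (t *\<^sub>R axis k 1)) = (\<lambda>t. pd k F (p + s *\<^sub>R axis k 1) * t)"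
    using linear_scale[OF l] by (auto simp: pd_def)
  ultimately show ?thesis unfolding has_field_derivative_def by simp
qed

lemma norm_two_axis: "norm (s *\<^sub>R axis i (1::real) + t *\<^sub>R axis j 1 :: real^'n::finite) \<le> \<bar>s\<bar> + \<bar>t\<bar>"
  using norm_triangle_ineq[of "s *\<^sub>R axis i (1::real)" "t *\<^sub>R axis j 1"] by simp



lemma schwarz_aux:
  fixes f :: "real^'n::finite \<Rightarrow> real"
  assumes h: "h > 0" and ball: "\<And>s t. 0 \<le> s \<Longrightarrow> s \<le> h \<Longrightarrow> 0 \<le> t \<Longrightarrow> t \<le> h \<Longrightarrow>
        x + s *\<^sub>R axis i 1 + t *\<^sub>R axis j 1 \<in> U"
    and d0: "\<forall>y\<in>U. f differentiable (at y)" and d1: "\<forall>y\<in>U. pd i f differentiable (at y)"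
  shows "\<exists>s t. 0 < s \<and> s < h \<and> 0 < t \<and> t < h \<and>
     f (x + h *\<^sub>R axis i 1 + h *\<^sub>R axis j 1) - f (x + h *\<^sub>R axis i 1) - f (x + h *\<^sub>R axis j 1) + f x
     = h * h * pd j (pd i f) (x + s *\<^sub>R axis i 1 + t *\<^sub>R axis j 1)"
proof -
  let ?ei = "axis i (1::real) :: real^'n" and ?ej = "axis j (1::real) :: real^'n"
  define \<phi> where "\<phi> s = f ((x + h *\<^sub>R ?ej) + s *\<^sub>R ?ei) - f (x + s *\<^sub>R ?ei)" for s
  have "\<exists>z. 0 < z \<and> z < h \<and> \<phi> h - \<phi> 0 = (h - 0) *
      (pd i f ((x + h *\<^sub>R ?ej) + z *\<^sub>R ?ei) - pd i f (x + z *\<^sub>R ?ei))"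
    unfolding \<phi>_def
  proof (rule MVT2[OF h])
    fix s assume s: "0 \<le> s" "s \<le> h"
    have u1: "(x + h *\<^sub>R ?ej) + s *\<^sub>R ?ei \<in> U" using ball[OF s, of h] h by (simp add: algebra_simps)
    have u2: "x + s *\<^sub>R ?ei \<in> U" using ball[OF s, of 0] h by simp
    show "((\<lambda>s. f ((x + h *\<^sub>R ?ej) + s *\<^sub>R ?ei) - f (x + s *\<^sub>R ?ei)) has_real_derivative
       pd i f ((x + h *\<^sub>R ?ej) + s *\<^sub>R ?ei) - pd i f (x + s *\<^sub>R ?ei)) (at s)"
      by (intro DERIV_diff line_deriv) (use d0 u1 u2 in auto)
  qed
  then obtain s where s: "0 < s" "s < h" and
    e1: "\<phi> h - \<phi> 0 = h * (pd i f ((x + h *\<^sub>R ?ej) + s *\<^sub>R ?ei) - pd i f (x + s *\<^sub>R ?ei))" by auto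
  have "\<exists>z. 0 < z \<and> z < h \<and> pd i f ((x + s *\<^sub>R ?ei) + h *\<^sub>R ?ej) - pd i f ((x + s *\<^sub>R ?ei) + 0 *\<^sub>R ?ej) = (h - 0) *
      pd j (pd i f) ((x + s *\<^sub>R ?ei) + z *\<^sub>R ?ej)"
  proof (rule MVT2[OF h])
    fix t assume t: "0 \<le> t" "t \<le> h"
    have u1: "(x + s *\<^sub>R ?ei) + t *\<^sub>R ?ej \<in> U" using ball[of s t] s t by (simp add: algebra_simps)
    show "((\<lambda>t. pd i f ((x + s *\<^sub>R ?ei) + t *\<^sub>R ?ej)) has_real_derivative
       pd j (pd i f) ((x + s *\<^sub>R ?ei) + t *\<^sub>R ?ej)) (at t)"
      by (intro line_deriv) (use d1 u1 in auto)
  qed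
  then obtain t where t: "0 < t" "t < h" and
    e2: "pd i f ((x + s *\<^sub>R ?ei) + h *\<^sub>R ?ej) - pd i f (x + s *\<^sub>R ?ei) = h * pd j (pd i f) ((x + s *\<^sub>R ?ei) + t *\<^sub>R ?ej)"
    by auto
  have pe: "(x + h *\<^sub>R ?ej) + s *\<^sub>R ?ei = (x + s *\<^sub>R ?ei) + h *\<^sub>R ?ej" by (simp add: algebra_simps)
  have "\<phi> h - \<phi> 0 = h * h * pd j (pd i f) (x + s *\<^sub>R ?ei + t *\<^sub>R ?ej)"
    using e1 e2 unfolding pe by (simp add: mult.assoc)
  moreover have "\<phi> h - \<phi> 0 = f (x + h *\<^sub>R ?ei + h *\<^sub>R ?ej) - f (x + h *\<^sub>R ?ei) - f (x + h *\<^sub>R ?ej) + f x"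
    unfolding \<phi>_def by (simp add: algebra_simps)
  ultimately show ?thesis using s t by metis
qed

lemma schwarz:
  fixes f :: "real^'n::finite \<Rightarrow> real"
  assumes "open U" "x \<in> U"
    and d0: "\<forall>y\<in>U. f differentiable (at y)" and di: "\<forall>y\<in>U. pd i f differentiable (at y)"
    and dj: "\<forall>y\<in>U. pd j f differentiable (at y)"
    and c1: "continuous (at x) (pd j (pd i f))" and c2: "continuous (at x) (pd i (pd j f))"
  shows "pd j (pd i f) x = pd i (pd j f) x"
proof (rule ccontr)
  let ?ei = "axis i (1::real) :: real^'n" and ?ej = "axis j (1::real) :: real^'n"
  assume ne: "pd j (pd i f) x \<noteq> pd i (pd j f) x"
  define e where "e = \<bar>pd j (pd i f) x - pd i (pd j f) x\<bar> / 2"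
  have e: "e > 0" using ne by (simp add: e_def)
  obtain d1 where d1: "d1 > 0" "\<And>y. dist y x < d1 \<Longrightarrow> dist (pd j (pd i f) y) (pd j (pd i f) x) < e"
    using c1 e unfolding continuous_at_eps_delta by metis
  obtain d2 where d2: "d2 > 0" "\<And>y. dist y x < d2 \<Longrightarrow> dist (pd i (pd j f) y) (pd i (pd j f) x) < e"
    using c2 e unfolding continuous_at_eps_delta by metis
  obtain r where r: "r > 0" "ball x r \<subseteq> U" using assms(1,2) open_contains_ball by blast
  define h where "h = min r (min d1 d2) / 3"
  have h: "h > 0" using r d1 d2 by (simp add: h_def)
  have close: "dist (x + s *\<^sub>R ?ei + t *\<^sub>R ?ej) x < min r (min d1 d2)"
    if "0 \<le> s" "s \<le> h" "0 \<le> t" "t \<le> h" for s t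
  proof -
    have "dist (x + s *\<^sub>R ?ei + t *\<^sub>R ?ej) x = norm (s *\<^sub>R ?ei + t *\<^sub>R ?ej)"
      by (simp add: dist_norm)
    also have "\<dots> \<le> \<bar>s\<bar> + \<bar>t\<bar>" by (rule norm_two_axis)
    also have "\<dots> < min r (min d1 d2)" using that h by (simp add: h_def)
    finally show ?thesis .
  qed
  have inU1: "x + s *\<^sub>R ?ei + t *\<^sub>R ?ej \<in> U" if "0 \<le> s" "s \<le> h" "0 \<le> t" "t \<le> h" for s t
    using close[OF that] r by (auto simp: dist_commute subset_iff)
  have inU2: "x + t *\<^sub>R ?ej + s *\<^sub>R ?ei \<in> U" if "0 \<le> t" "t \<le> h" "0 \<le> s" "s \<le> h" for s t
    using inU1[of s t] that by (simp add: algebra_simps)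
  obtain s1 t1 where st1: "0 < s1" "s1 < h" "0 < t1" "t1 < h" and
    E1: "f (x + h *\<^sub>R ?ei + h *\<^sub>R ?ej) - f (x + h *\<^sub>R ?ei) - f (x + h *\<^sub>R ?ej) + f x
     = h * h * pd j (pd i f) (x + s1 *\<^sub>R ?ei + t1 *\<^sub>R ?ej)"
    using schwarz_aux[OF h inU1 d0 di] by blast
  obtain t2 s2 where st2: "0 < t2" "t2 < h" "0 < s2" "s2 < h" and
    E2: "f (x + h *\<^sub>R ?ej + h *\<^sub>R ?ei) - f (x + h *\<^sub>R ?ej) - f (x + h *\<^sub>R ?ei) + f x
     = h * h * pd i (pd j f) (x + t2 *\<^sub>R ?ej + s2 *\<^sub>R ?ei)"
    using schwarz_aux[OF h inU2 d0 dj] by blast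
  have "x + h *\<^sub>R ?ej + h *\<^sub>R ?ei = x + h *\<^sub>R ?ei + h *\<^sub>R ?ej" by (simp add: algebra_simps)
  with E1 E2 h have eq: "pd j (pd i f) (x + s1 *\<^sub>R ?ei + t1 *\<^sub>R ?ej) = pd i (pd j f) (x + s2 *\<^sub>R ?ei + t2 *\<^sub>R ?ej)"
    by (simp add: algebra_simps)
  have a1: "dist (pd j (pd i f) (x + s1 *\<^sub>R ?ei + t1 *\<^sub>R ?ej)) (pd j (pd i f) x) < e"
    using d1(2) close[of s1 t1] st1 by auto
  have a2: "dist (pd i (pd j f) (x + s2 *\<^sub>R ?ei + t2 *\<^sub>R ?ej)) (pd i (pd j f) x) < e"
    using d2(2) close[of s2 t2] st2 by auto
  have aux: "\<bar>p - a\<bar> < \<bar>a - b\<bar> / 2 \<Longrightarrow> \<bar>q - b\<bar> < \<bar>a - b\<bar> / 2 \<Longrightarrow> p = q \<Longrightarrow> False" for p q a b :: real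
    by (auto simp: abs_if split: if_splits)
  from aux[OF a1[unfolded e_def dist_real_def] a2[unfolded e_def dist_real_def] eq] show False .
qed



lemma prod_differentiable:
  fixes f :: "'i \<Rightarrow> real^'n::finite \<Rightarrow> real"
  assumes "\<And>i. i \<in> I \<Longrightarrow> f i differentiable (at x)"
  shows "(\<lambda>y. \<Prod>i\<in>I. f i y) differentiable (at x)"
proof -
  have "\<And>i. i \<in> I \<Longrightarrow> (f i has_derivative frechet_derivative (f i) (at x)) (at x)"
    by (rule has_pd[OF assms])
  from has_derivative_prod[OF this] show ?thesis by (rule differentiableI)
qed

lemma det_differentiable:
  fixes M :: "real^'n::finite \<Rightarrow> real^'m::finite^'m"
  assumes "\<And>i j. (\<lambda>y. M y $ i $ j) differentiable (at x)"
  shows "(\<lambda>y. det (M y)) differentiable (at x)"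
proof -
  have "\<And>p. (\<lambda>y. of_int (sign p) * (\<Prod>i\<in>UNIV. M y $ i $ p i)) differentiable (at x)"
    by (rule differentiable_mult[OF differentiable_const prod_differentiable]) (rule assms)
  then show ?thesis unfolding det_def
    by (intro differentiable_sum) (simp_all add: finite_permutations)
qed

lemma lor_det:
  fixes g :: "real^'a::finite \<Rightarrow> real^'a^'a"
  assumes "lorentzian_metric U g" "y \<in> U"
  shows "det (g y) \<noteq> 0" "transpose (g y) = g y"
proof -
  from assms obtain i0 and P :: "real^'a^'a" where P: "invertible P"
    "transpose P ** g y ** P = (\<chi> i j. if i = j then (if i = i0 then -1 else 1) else 0)"
    and t: "transpose (g y) = g y" unfolding lorentzian_metric_def by blast
  show "transpose (g y) = g y" by (rule t)
  have "det (\<chi> i j. if i = j then (if i = i0 then -1 else 1) else 0 :: real^'a^'a) = (\<Prod>i\<in>UNIV. if i = i0 then -1 else 1)"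
    by (subst det_diagonal) auto
  also have "\<dots> \<noteq> 0" by (simp add: prod_zero_iff)
  finally have "det (transpose P ** g y ** P) \<noteq> 0" using P(2) by simp
  then show "det (g y) \<noteq> 0" by (simp add: det_mul)
qed

lemma inv_props:
  fixes G :: "real^'n::finite^'n"
  assumes "det G \<noteq> 0"
  shows "G ** matrix_inv G = mat 1" "matrix_inv G ** G = mat 1"
proof -
  have "invertible G" using assms invertible_det_nz by blast
  then have "\<exists>A'. G ** A' = mat 1 \<and> A' ** G = mat 1" unfolding invertible_def .
  then have "G ** matrix_inv G = mat 1 \<and> matrix_inv G ** G = mat 1"
    unfolding matrix_inv_def by (rule someI_ex)
  then show "G ** matrix_inv G = mat 1" "matrix_inv G ** G = mat 1" by auto
qed

lemma inv_sym:
  fixes G :: "real^'n::finite^'n"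
  assumes "det G \<noteq> 0" "transpose G = G"
  shows "transpose (matrix_inv G) = matrix_inv G"
proof -
  have "transpose (matrix_inv G) ** G = mat 1"
    using arg_cong[OF inv_props(1)[OF assms(1)], of transpose] assms(2) by (simp add: matrix_transpose_mul)
  then have "transpose (matrix_inv G) ** (G ** matrix_inv G) = matrix_inv G"
    by (simp add: matrix_mul_assoc)
  then show ?thesis using inv_props(1)[OF assms(1)] by simp
qed

lemma inv_entry:
  fixes G :: "real^'n::finite^'n"
  assumes "det G \<noteq> 0"
  shows "matrix_inv G $ k $ m = det (\<chi> i j. if j = k then axis m 1 $ i else G $ i $ j) / det G"
proof -
  have "G *v (matrix_inv G *v axis m 1) = axis m 1"
    by (simp add: matrix_vector_mul_assoc inv_props[OF assms])
  then have "matrix_inv G *v axis m 1 = (\<chi> k. det(\<chi> i j. if j=k then axis m 1 $i else G$i$j) / det G)"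
    using cramer[OF assms] by blast
  then have "(matrix_inv G *v axis m 1) $ k = det (\<chi> i j. if j = k then axis m 1 $ i else G $ i $ j) / det G"
    by simp
  moreover have "(matrix_inv G *v axis m 1) $ k = matrix_inv G $ k $ m"
    by (simp add: matrix_vector_mult_def axis_def if_distrib cong: if_cong)
  ultimately show ?thesis by simp
qed

lemma diff_cong_open:
  assumes "f differentiable (at x)" "open S" "x \<in> S" "\<And>y. y \<in> S \<Longrightarrow> f y = h y"
  shows "h differentiable (at x)"
  using assms has_derivative_transform_within_open[of f _ x UNIV S h] unfolding differentiable_def by blast

lemma ginv_differentiable:
  assumes "lorentzian_metric U g" "x \<in> U" "open U"
  shows "(\<lambda>y. ginv g y k m) differentiable (at x)"
proof -
  have sm: "\<And>i j. (\<lambda>y. g y $ i $ j) differentiable (at x)"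
    using assms smooth_diff0 unfolding lorentzian_metric_def by blast
  have "(\<lambda>y. det (\<chi> i j. if j = k then axis m 1 $ i else g y $ i $ j) / det (g y)) differentiable (at x)"
  proof (intro differentiable_divide det_differentiable)
    fix i j show "(\<lambda>y. (\<chi> i j. if j = k then axis m 1 $ i else g y $ i $ j) $ i $ j) differentiable (at x)"
      by (cases "j = k") (auto simp: sm)
  qed (auto simp: sm lor_det[OF assms(1,2)])
  moreover have "\<And>y. y \<in> U \<Longrightarrow> det (\<chi> i j. if j = k then axis m 1 $ i else g y $ i $ j) / det (g y) = ginv g y k m"
    unfolding ginv_def by (rule inv_entry[symmetric], rule lor_det[OF assms(1)])
  ultimately show ?thesis
    by (rule diff_cong_open[OF _ assms(3,2)])
qed



lemma contr1:
  fixes G C :: "'n::finite \<Rightarrow> 'n \<Rightarrow> real" and u v \<phi> \<beta> :: "'n \<Rightarrow> real"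
  shows "(\<Sum>i\<in>UNIV. v i * (
      (\<phi> i * G j l + \<beta> i * u j * u l + b * (C i j * u l + u j * C i l)) +
      (\<phi> j * G l i + \<beta> j * u l * u i + b * (C j l * u i + u l * C j i)) +
      (\<phi> l * G i j + \<beta> l * u i * u j + b * (C l i * u j + u i * C l j))))
    = (\<Sum>i\<in>UNIV. v i * \<phi> i) * G j l + (\<Sum>i\<in>UNIV. v i * \<beta> i) * u j * u l
      + b * ((\<Sum>i\<in>UNIV. v i * C i j) * u l + u j * (\<Sum>i\<in>UNIV. v i * C i l))
      + \<phi> j * (\<Sum>i\<in>UNIV. v i * G l i) + \<beta> j * u l * (\<Sum>i\<in>UNIV. v i * u i)
      + b * (C j l * (\<Sum>i\<in>UNIV. v i * u i) + u l * (\<Sum>i\<in>UNIV. v i * C j i))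
      + \<phi> l * (\<Sum>i\<in>UNIV. v i * G i j) + \<beta> l * (\<Sum>i\<in>UNIV. v i * u i) * u j
      + b * ((\<Sum>i\<in>UNIV. v i * C l i) * u j + (\<Sum>i\<in>UNIV. v i * u i) * C l j)"
  by (simp add: algebra_simps sum.distrib sum_distrib_left sum_distrib_right)

lemma contr2:
  fixes G C :: "'n::finite \<Rightarrow> 'n \<Rightarrow> real" and u v \<phi> \<beta> :: "'n \<Rightarrow> real"
  shows "(\<Sum>j\<in>UNIV. v j * (p * G j l + q * u j * u l + (\<phi> j - \<beta> j) * u l + (\<phi> l - \<beta> l) * u j
         - b * (C j l + C l j)))
    = p * (\<Sum>j\<in>UNIV. v j * G j l) + q * (\<Sum>j\<in>UNIV. v j * u j) * u l
      + ((\<Sum>j\<in>UNIV. v j * \<phi> j) - (\<Sum>j\<in>UNIV. v j * \<beta> j)) * u l + (\<phi> l - \<beta> l) * (\<Sum>j\<in>UNIV. v j * u j)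
      - b * ((\<Sum>j\<in>UNIV. v j * C j l) + (\<Sum>j\<in>UNIV. v j * C l j))"
  by (simp add: algebra_simps sum.distrib sum_distrib_left sum_distrib_right sum_subtractf)

lemma algebra_main:
  fixes G C :: "'n::finite \<Rightarrow> 'n \<Rightarrow> real" and u v \<alpha> \<beta> :: "'n \<Rightarrow> real" and b n s :: real
  assumes vG: "\<And>l. (\<Sum>j\<in>UNIV. v j * G j l) = u l"
    and Gsym: "\<And>i j. G i j = G j i"
    and nrm: "(\<Sum>k\<in>UNIV. v k * u k) = -1"
    and acc: "\<And>j. (\<Sum>k\<in>UNIV. v k * C k j) = 0"
    and Q: "\<And>i. (\<Sum>k\<in>UNIV. v k * C i k) = 0"
    and alpha: "\<And>k. \<alpha> k = s * u k"
    and n: "n \<ge> 0"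
    and CK: "\<And>i j l.
      (\<alpha> i * G j l + \<beta> i * u j * u l + b * (C i j * u l + u j * C i l)) +
      (\<alpha> j * G l i + \<beta> j * u l * u i + b * (C j l * u i + u l * C j i)) +
      (\<alpha> l * G i j + \<beta> l * u i * u j + b * (C l i * u j + u i * C l j))
      = (n * \<alpha> i - \<beta> i) / (n + 2) * G j l + (n * \<alpha> j - \<beta> j) / (n + 2) * G l i
        + (n * \<alpha> l - \<beta> l) / (n + 2) * G i j"
  shows "\<And>k. \<beta> k = - (\<Sum>m\<in>UNIV. v m * \<beta> m) * u k"
    and "\<And>j l. b * (C j l + C l j) = (\<Sum>m\<in>UNIV. v m * \<beta> m) * (G j l + u j * u l)"
proof -
  define \<eta> where "\<eta> a = (n * \<alpha> a - \<beta> a) / (n + 2)" for a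
  define \<phi> where "\<phi> a = \<alpha> a - \<eta> a" for a
  have vG': "(\<Sum>j\<in>UNIV. v j * G l j) = u l" for l
  proof -
    have "(\<Sum>j\<in>UNIV. v j * G l j) = (\<Sum>j\<in>UNIV. v j * G j l)"
      by (rule sum.cong[OF refl]) (simp add: Gsym)
    then show ?thesis using vG[of l] by simp
  qed
  have CK': "(\<phi> i * G j l + \<beta> i * u j * u l + b * (C i j * u l + u j * C i l)) +
      (\<phi> j * G l i + \<beta> j * u l * u i + b * (C j l * u i + u l * C j i)) +
      (\<phi> l * G i j + \<beta> l * u i * u j + b * (C l i * u j + u i * C l j)) = 0" for i j l
    using CK[of i j l] unfolding \<phi>_def \<eta>_def[symmetric] by (simp add: algebra_simps)
  define pv where "pv = (\<Sum>i\<in>UNIV. v i * \<phi> i)"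
  define bv where "bv = (\<Sum>i\<in>UNIV. v i * \<beta> i)"
  have E: "pv * G j l + bv * u j * u l + (\<phi> j - \<beta> j) * u l + (\<phi> l - \<beta> l) * u j
         - b * (C j l + C l j) = 0" for j l
  proof -
    have "(\<Sum>i\<in>UNIV. v i * (
      (\<phi> i * G j l + \<beta> i * u j * u l + b * (C i j * u l + u j * C i l)) +
      (\<phi> j * G l i + \<beta> j * u l * u i + b * (C j l * u i + u l * C j i)) +
      (\<phi> l * G i j + \<beta> l * u i * u j + b * (C l i * u j + u i * C l j)))) = 0"
      by (simp add: CK')
    then show ?thesis unfolding contr1 pv_def[symmetric] bv_def[symmetric]
      by (simp only: acc Q nrm vG vG') (simp add: algebra_simps)
  qed
  have E2: "2 * (pv - bv) * u l - (\<phi> l - \<beta> l) = 0" for l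
  proof -
    have "(\<Sum>j\<in>UNIV. v j * (pv * G j l + bv * u j * u l + (\<phi> j - \<beta> j) * u l + (\<phi> l - \<beta> l) * u j
         - b * (C j l + C l j))) = 0" by (simp add: E)
    then show ?thesis unfolding contr2 pv_def[symmetric] bv_def[symmetric]
      by (simp only: acc Q nrm vG) (simp add: algebra_simps)
  qed
  have "(\<Sum>l\<in>UNIV. v l * (2 * (pv - bv) * u l - (\<phi> l - \<beta> l))) = 0" by (simp only: E2 mult_zero_right sum.neutral_const)
  moreover have "(\<Sum>l\<in>UNIV. v l * (2 * (pv - bv) * u l - (\<phi> l - \<beta> l)))
     = 2 * (pv - bv) * (\<Sum>l\<in>UNIV. v l * u l) - ((\<Sum>l\<in>UNIV. v l * \<phi> l) - (\<Sum>l\<in>UNIV. v l * \<beta> l))"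
    by (simp add: algebra_simps sum.distrib sum_distrib_left sum_subtractf)
  ultimately have "2 * (pv - bv) * (\<Sum>l\<in>UNIV. v l * u l) - (pv - bv) = 0"
    unfolding pv_def bv_def by simp
  then have pb: "pv = bv" using nrm by simp
  have phb: "\<phi> l = \<beta> l" for l using E2[of l] pb by simp
  have bu: "\<beta> l = 2 * s / (n + 1) * u l" for l
  proof -
    have "\<alpha> l - (n * \<alpha> l - \<beta> l) / (n + 2) = \<beta> l" using phb[of l] unfolding \<phi>_def \<eta>_def .
    then have "(n + 2) * \<alpha> l - (n * \<alpha> l - \<beta> l) = (n + 2) * \<beta> l" using n by (simp add: field_simps)
    then have "2 * \<alpha> l = (n + 1) * \<beta> l" by (simp add: algebra_simps)
    then show ?thesis using n alpha[of l] by (simp add: field_simps)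
  qed
  have bvv: "bv = - (2 * s / (n + 1))"
  proof -
    have "bv = (\<Sum>i\<in>UNIV. (2 * s / (n + 1)) * (v i * u i))"
      unfolding bv_def bu by (simp add: mult.left_commute)
    also have "\<dots> = (2 * s / (n + 1)) * (\<Sum>i\<in>UNIV. v i * u i)" by (simp add: sum_distrib_left)
    finally show ?thesis using nrm by simp
  qed
  show "\<beta> k = - (\<Sum>m\<in>UNIV. v m * \<beta> m) * u k" for k
    using bu[of k] bvv unfolding bv_def by simp
  show "b * (C j l + C l j) = (\<Sum>m\<in>UNIV. v m * \<beta> m) * (G j l + u j * u l)" for j l
    using E[of j l] pb phb unfolding bv_def[symmetric] by (simp add: algebra_simps)
qed




lemma df_algebra:
  fixes G Gi C :: "'n::finite \<Rightarrow> 'n \<Rightarrow> real" and u v \<alpha> \<beta> :: "'n \<Rightarrow> real" and b :: real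
  assumes GiGt: "\<And>i k. (\<Sum>j\<in>UNIV. Gi j i * G j k) = (if i = k then 1 else 0)"
    and vt: "\<And>i. (\<Sum>j\<in>UNIV. Gi j i * u j) = v i"
    and acc: "\<And>k. (\<Sum>i\<in>UNIV. v i * C i k) = 0"
    and DF: "(\<Sum>i\<in>UNIV. \<Sum>j\<in>UNIV. Gi j i * (\<alpha> i * G j k + \<beta> i * u j * u k + b * (C i j * u k + u j * C i k))) = 0"
  shows "\<alpha> k = - ((\<Sum>i\<in>UNIV. v i * \<beta> i) + b * (\<Sum>i\<in>UNIV. \<Sum>j\<in>UNIV. Gi j i * C i j)) * u k"
proof -
  have "(\<Sum>i\<in>UNIV. \<Sum>j\<in>UNIV. Gi j i * (\<alpha> i * G j k + \<beta> i * u j * u k + b * (C i j * u k + u j * C i k)))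
    = (\<Sum>i\<in>UNIV. \<alpha> i * (\<Sum>j\<in>UNIV. Gi j i * G j k)) + (\<Sum>i\<in>UNIV. \<beta> i * (\<Sum>j\<in>UNIV. Gi j i * u j)) * u k
      + b * (\<Sum>i\<in>UNIV. \<Sum>j\<in>UNIV. Gi j i * C i j) * u k + b * (\<Sum>i\<in>UNIV. (\<Sum>j\<in>UNIV. Gi j i * u j) * C i k)"
    by (simp add: algebra_simps sum.distrib sum_distrib_left sum_distrib_right)
  also have "\<dots> = \<alpha> k + (\<Sum>i\<in>UNIV. v i * \<beta> i) * u k + b * (\<Sum>i\<in>UNIV. \<Sum>j\<in>UNIV. Gi j i * C i j) * u k"
    by (simp only: GiGt vt acc) (simp add: mult.commute if_distrib cong: if_cong)
  finally show ?thesis using DF by (simp add: algebra_simps)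
qed

lemma hess_algebra:
  fixes C :: "'n::finite \<Rightarrow> 'n \<Rightarrow> real" and u v E :: "'n \<Rightarrow> real" and D :: real
  assumes nrm: "(\<Sum>k\<in>UNIV. v k * u k) = -1"
    and acc: "\<And>j. (\<Sum>k\<in>UNIV. v k * C k j) = 0"
    and Q: "\<And>i. (\<Sum>k\<in>UNIV. v k * C i k) = 0"
    and sym: "\<And>i j. E i * u j + D * C i j = E j * u i + D * C j i"
    and D: "D \<noteq> 0"
  shows "\<And>i. E i = - (\<Sum>k\<in>UNIV. v k * E k) * u i" and "\<And>i j. C i j = C j i"
proof -
  have e: "E i = - (\<Sum>k\<in>UNIV. v k * E k) * u i" for i
  proof -
    have "(\<Sum>j\<in>UNIV. v j * (E i * u j + D * C i j)) = (\<Sum>j\<in>UNIV. v j * (E j * u i + D * C j i))"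
      using sym by simp
    moreover have "(\<Sum>j\<in>UNIV. v j * (E i * u j + D * C i j)) = E i * (\<Sum>j\<in>UNIV. v j * u j) + D * (\<Sum>j\<in>UNIV. v j * C i j)"
      by (simp add: algebra_simps sum.distrib sum_distrib_left)
    moreover have "(\<Sum>j\<in>UNIV. v j * (E j * u i + D * C j i)) = (\<Sum>j\<in>UNIV. v j * E j) * u i + D * (\<Sum>j\<in>UNIV. v j * C j i)"
      by (simp add: algebra_simps sum.distrib sum_distrib_left sum_distrib_right)
    ultimately show ?thesis using nrm acc Q by simp
  qed
  show "E i = - (\<Sum>k\<in>UNIV. v k * E k) * u i" for i by (rule e)
  show "C i j = C j i" for i j
    using sym[of i j] e[of i] e[of j] D by (simp add: algebra_simps)
qed




lemma pd_uminus: "f differentiable (at x) \<Longrightarrow> pd i (\<lambda>y. - f y) x = - pd i f x"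
proof -
  assume a: "f differentiable (at x)"
  have "((\<lambda>y. - f y) has_derivative (\<lambda>v. - frechet_derivative f (at x) v)) (at x)"
    by (intro has_derivative_minus has_pd a)
  from pd_has[OF this] show ?thesis unfolding pd_def .
qed

locale CKS =
  fixes U :: "(real^'n::finite) set"
    and g :: "real^'n \<Rightarrow> real^'n^'n"
    and A B :: "real^'n \<Rightarrow> real"
    and u :: "real^'n \<Rightarrow> real^'n"
  assumes openU: "open U"
    and lor: "lorentzian_metric U g"
    and sA: "smooth_on U A" and sB: "smooth_on U B" and su: "\<forall>k. smooth_on U (\<lambda>x. u x $ k)"
    and nrm: "\<forall>x\<in>U. (\<Sum>i\<in>UNIV. \<Sum>j\<in>UNIV. ginv g x i j * u x $ i * u x $ j) = -1"
    and Bnz: "\<forall>x\<in>U. B x \<noteq> 0"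
    and CK: "conformal_killing U g (\<lambda>x i j. A x * g x $ i $ j + B x * u x $ i * u x $ j)"
    and DF: "divergence_free U g (\<lambda>x i j. A x * g x $ i $ j + B x * u x $ i * u x $ j)"
    and acc: "\<forall>x\<in>U. \<forall>j. accel g u j x = 0"
    and Bdot: "\<forall>x\<in>U. dotd g u B x \<noteq> 0"
begin

lemma gsym: "y \<in> U \<Longrightarrow> g y $ i $ j = g y $ j $ i"
proof -
  assume y: "y \<in> U"
  from arg_cong[OF lor_det(2)[OF lor y], of "\<lambda>M. M $ j $ i"] show ?thesis by (simp add: transpose_def)
qed

lemma gisym: "y \<in> U \<Longrightarrow> ginv g y i j = ginv g y j i"
proof -
  assume y: "y \<in> U"
  from arg_cong[OF inv_sym[OF lor_det[OF lor y]], of "\<lambda>M. M $ j $ i"] show ?thesis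
    by (simp add: transpose_def ginv_def)
qed

lemma GiG: "y \<in> U \<Longrightarrow> (\<Sum>j\<in>UNIV. ginv g y i j * g y $ j $ k) = (if i = k then 1 else 0)"
proof -
  assume y: "y \<in> U"
  have "(matrix_inv (g y) ** g y) $ i $ k = mat 1 $ i $ k" using inv_props(2)[OF lor_det(1)[OF lor y]] by simp
  then show ?thesis unfolding ginv_def matrix_matrix_mult_def mat_def by simp
qed

lemma GiG': "y \<in> U \<Longrightarrow> (\<Sum>j\<in>UNIV. ginv g y j i * g y $ j $ k) = (if i = k then 1 else 0)"
proof -
  assume y: "y \<in> U"
  have "(\<Sum>j\<in>UNIV. ginv g y j i * g y $ j $ k) = (\<Sum>j\<in>UNIV. ginv g y i j * g y $ j $ k)"
    by (rule sum.cong[OF refl]) (metis gisym y)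
  then show ?thesis using GiG[OF y] by simp
qed

lemma gdiff: "y \<in> U \<Longrightarrow> (\<lambda>z. g z $ i $ j) differentiable (at y)"
  using lor smooth_diff0 unfolding lorentzian_metric_def by blast
lemma gdiff1: "y \<in> U \<Longrightarrow> pd a (\<lambda>z. g z $ i $ j) differentiable (at y)"
  using lor smooth_diff1 unfolding lorentzian_metric_def by blast
lemma udiff: "y \<in> U \<Longrightarrow> (\<lambda>z. u z $ i) differentiable (at y)"
  using su smooth_diff0 by blast
lemma Adiff: "y \<in> U \<Longrightarrow> A differentiable (at y)"
  using sA smooth_diff0 by blast
lemma Bdiff: "y \<in> U \<Longrightarrow> B differentiable (at y)"
  using sB smooth_diff0 by blast
lemma Bdiff1: "y \<in> U \<Longrightarrow> pd i B differentiable (at y)"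
  using sB smooth_diff1 by blast
lemma Bdiff2: "y \<in> U \<Longrightarrow> pd i (pd j B) differentiable (at y)"
  using sB smooth_diff2 by blast
lemma gidiff: "y \<in> U \<Longrightarrow> (\<lambda>z. ginv g z k m) differentiable (at y)"
  using ginv_differentiable[OF lor _ openU] by blast

lemma vdef: "raise g u k y = (\<Sum>l\<in>UNIV. ginv g y k l * u y $ l)"
  unfolding raise_def ..

lemma vdiff: "y \<in> U \<Longrightarrow> (\<lambda>z. raise g u k z) differentiable (at y)"
  unfolding raise_def by (intro differentiable_sum ballI differentiable_mult gidiff udiff) auto

lemma vG: "y \<in> U \<Longrightarrow> (\<Sum>j\<in>UNIV. raise g u j y * g y $ j $ l) = u y $ l"
proof -
  assume y: "y \<in> U"
  have "(\<Sum>j\<in>UNIV. raise g u j y * g y $ j $ l) = (\<Sum>j\<in>UNIV. \<Sum>m\<in>UNIV. u y $ m * (ginv g y j m * g y $ j $ l))"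
    unfolding raise_def by (simp add: sum_distrib_right sum_distrib_left algebra_simps)
  also have "\<dots> = (\<Sum>m\<in>UNIV. u y $ m * (\<Sum>j\<in>UNIV. ginv g y j m * g y $ j $ l))"
    by (subst sum.swap) (simp add: sum_distrib_left)
  also have "\<dots> = u y $ l" by (simp add: GiG'[OF y] if_distrib cong: if_cong)
  finally show ?thesis .
qed

lemma vG': "y \<in> U \<Longrightarrow> (\<Sum>j\<in>UNIV. raise g u j y * g y $ l $ j) = u y $ l"
  using vG[of y l] gsym[of y] by simp

lemma nrm': "y \<in> U \<Longrightarrow> (\<Sum>k\<in>UNIV. raise g u k y * u y $ k) = -1"
proof -
  assume y: "y \<in> U"
  have "(\<Sum>k\<in>UNIV. raise g u k y * u y $ k) = (\<Sum>i\<in>UNIV. \<Sum>j\<in>UNIV. ginv g y i j * u y $ i * u y $ j)"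
    unfolding raise_def by (simp add: sum_distrib_right sum_distrib_left algebra_simps)
  then show ?thesis using nrm y by simp
qed

lemma dgsym: "y \<in> U \<Longrightarrow> pd a (\<lambda>z. g z $ b $ c) y = pd a (\<lambda>z. g z $ c $ b) y"
  by (rule pd_cong_open[OF openU]) (auto intro: gsym)

lemma chrsym: "y \<in> U \<Longrightarrow> christoffel g k i j y = christoffel g k j i y"
  unfolding christoffel_def by (simp add: dgsym[of y _ i j] algebra_simps)

lemma lower: "y \<in> U \<Longrightarrow> (\<Sum>m\<in>UNIV. christoffel g m a b y * g y $ m $ c)
   = (1/2) * (pd a (\<lambda>z. g z $ b $ c) y + pd b (\<lambda>z. g z $ a $ c) y - pd c (\<lambda>z. g z $ a $ b) y)"
proof -
  assume y: "y \<in> U"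
  define X where "X l = pd a (\<lambda>z. g z $ b $ l) y + pd b (\<lambda>z. g z $ a $ l) y - pd l (\<lambda>z. g z $ a $ b) y" for l
  have "(\<Sum>m\<in>UNIV. christoffel g m a b y * g y $ m $ c) = (\<Sum>m\<in>UNIV. \<Sum>l\<in>UNIV. (1/2) * X l * (ginv g y l m * g y $ m $ c))"
    unfolding christoffel_def X_def[symmetric] by (simp add: sum_distrib_right sum_distrib_left algebra_simps gisym[OF y])
  also have "\<dots> = (\<Sum>l\<in>UNIV. (1/2) * X l * (\<Sum>m\<in>UNIV. ginv g y l m * g y $ m $ c))"
    by (subst sum.swap) (simp add: sum_distrib_left)
  also have "\<dots> = (1/2) * X c" by (simp add: GiG[OF y] if_distrib cong: if_cong)
  finally show ?thesis unfolding X_def .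
qed

lemma compat: "y \<in> U \<Longrightarrow> pd a (\<lambda>z. g z $ b $ c) y
   = (\<Sum>m\<in>UNIV. christoffel g m a b y * g y $ m $ c) + (\<Sum>m\<in>UNIV. christoffel g m a c y * g y $ b $ m)"
proof -
  assume y: "y \<in> U"
  have "(\<Sum>m\<in>UNIV. christoffel g m a c y * g y $ b $ m) = (\<Sum>m\<in>UNIV. christoffel g m a c y * g y $ m $ b)"
    by (rule sum.cong[OF refl]) (metis gsym y)
  then show ?thesis using lower[OF y, of a b c] lower[OF y, of a c b]
    dgsym[OF y, of a c b]
    by (simp add: algebra_simps)
qed


abbreviation "KK \<equiv> (\<lambda>x i j. A x * g x $ i $ j + B x * u x $ i * u x $ j)"

lemma pdK: "y \<in> U \<Longrightarrow> pd a (\<lambda>z. A z * g z $ b $ c + B z * u z $ b * u z $ c) y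
  = A y * pd a (\<lambda>z. g z $ b $ c) y + pd a A y * g y $ b $ c
    + (B y * u y $ b) * pd a (\<lambda>z. u z $ c) y + (B y * pd a (\<lambda>z. u z $ b) y + pd a B y * u y $ b) * u y $ c"
proof -
  assume y: "y \<in> U"
  note d = Adiff[OF y] Bdiff[OF y] gdiff[OF y] udiff[OF y]
  have "pd a (\<lambda>z. A z * g z $ b $ c + B z * u z $ b * u z $ c) y
     = pd a (\<lambda>z. A z * g z $ b $ c) y + pd a (\<lambda>z. B z * u z $ b * u z $ c) y"
    by (rule pd_add) (intro differentiable_mult d)+
  also have "pd a (\<lambda>z. A z * g z $ b $ c) y = A y * pd a (\<lambda>z. g z $ b $ c) y + pd a A y * g y $ b $ c"
    by (rule pd_mult) (intro d)+
  also have "pd a (\<lambda>z. B z * u z $ b * u z $ c) y = (B y * u y $ b) * pd a (\<lambda>z. u z $ c) y + pd a (\<lambda>z. B z * u z $ b) y * u y $ c"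
    by (rule pd_mult) (intro differentiable_mult d)+
  also have "pd a (\<lambda>z. B z * u z $ b) y = B y * pd a (\<lambda>z. u z $ b) y + pd a B y * u y $ b"
    by (rule pd_mult) (intro d)+
  finally show ?thesis by (simp only: add.assoc)
qed

lemma cov2K: "y \<in> U \<Longrightarrow> cov2 g KK a b c y
  = pd a A y * g y $ b $ c + pd a B y * u y $ b * u y $ c
    + B y * (cov1 g u a b y * u y $ c + u y $ b * cov1 g u a c y)"
  unfolding cov2_def cov1_def
  apply (subst pdK, assumption)
  apply (subst compat, assumption)
  by (simp add: algebra_simps sum.distrib sum_distrib_left sum_distrib_right sum_subtractf)

lemma trace_eq: "y \<in> U \<Longrightarrow> trace2 g KK y = real CARD('n) * A y - B y"
proof -
  assume y: "y \<in> U"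
  have "trace2 g KK y = A y * (\<Sum>i\<in>UNIV. \<Sum>j\<in>UNIV. ginv g y i j * g y $ i $ j)
       + B y * (\<Sum>i\<in>UNIV. \<Sum>j\<in>UNIV. ginv g y i j * u y $ i * u y $ j)"
    unfolding trace2_def by (simp add: algebra_simps sum.distrib sum_distrib_left)
  moreover have "(\<Sum>i\<in>UNIV. \<Sum>j\<in>UNIV. ginv g y i j * g y $ i $ j) = (\<Sum>i\<in>UNIV. \<Sum>j\<in>UNIV. ginv g y i j * g y $ j $ i)"
    by (intro sum.cong refl) (metis gsym y)
  moreover have "\<dots> = real CARD('n)" by (simp add: GiG[OF y])
  ultimately show ?thesis using nrm y by simp
qed

lemma pd_trace: "y \<in> U \<Longrightarrow> pd i (trace2 g KK) y = real CARD('n) * pd i A y - pd i B y"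
proof -
  assume y: "y \<in> U"
  have "pd i (trace2 g KK) y = pd i (\<lambda>z. real CARD('n) * A z - B z) y"
    by (rule pd_cong_open[OF openU y]) (rule trace_eq)
  also have "\<dots> = pd i (\<lambda>z. real CARD('n) * A z) y - pd i B y"
    by (rule pd_diff) (intro differentiable_mult differentiable_const Adiff Bdiff y)+
  also have "pd i (\<lambda>z. real CARD('n) * A z) y = real CARD('n) * pd i A y"
    using pd_mult[OF differentiable_const[of "real CARD('n)"] Adiff[OF y], where i=i] by (simp add: pd_const)
  finally show ?thesis .
qed

lemma eta_eq: "y \<in> U \<Longrightarrow> eta g KK i y = (real CARD('n) * pd i A y - pd i B y) / (real CARD('n) + 2)"
proof -
  assume y: "y \<in> U"
  have "(\<Sum>j\<in>UNIV. \<Sum>m\<in>UNIV. ginv g y j m * cov2 g KK j m i y) = (\<Sum>m\<in>UNIV. \<Sum>j\<in>UNIV. ginv g y m j * cov2 g KK j m i y)"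
  proof (subst sum.swap, intro sum.cong refl)
    fix m j show "ginv g y j m * cov2 g KK j m i y = ginv g y m j * cov2 g KK j m i y"
      using gisym[OF y, of j m] by simp
  qed
  also have "\<dots> = 0" using DF y unfolding divergence_free_def by blast
  finally show ?thesis unfolding eta_def pd_trace[OF y] by simp
qed

lemma alpha_u: "y \<in> U \<Longrightarrow> pd k A y = - ((\<Sum>i\<in>UNIV. raise g u i y * pd i B y)
     + B y * (\<Sum>i\<in>UNIV. \<Sum>j\<in>UNIV. ginv g y j i * cov1 g u i j y)) * u y $ k"
proof -
  assume y: "y \<in> U"
  show ?thesis
  proof (rule df_algebra[where G = "\<lambda>a b. g y $ a $ b" and u = "\<lambda>a. u y $ a" and \<beta> = "\<lambda>a. pd a B y"
        and \<alpha> = "\<lambda>a. pd a A y"])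
    show "(\<Sum>j\<in>UNIV. ginv g y j i * g y $ j $ k) = (if i = k then 1 else 0)" for i k by (rule GiG'[OF y])
    show "(\<Sum>j\<in>UNIV. ginv g y j i * u y $ j) = raise g u i y" for i
      unfolding raise_def by (intro sum.cong refl) (simp add: gisym[OF y, of _ i])
    show "(\<Sum>i\<in>UNIV. raise g u i y * cov1 g u i k y) = 0" for k
      using acc y unfolding accel_def by blast
    have "(\<Sum>j\<in>UNIV. \<Sum>i\<in>UNIV. ginv g y j i * cov2 g KK i j k y) = 0"
      using DF y unfolding divergence_free_def by blast
    then show "(\<Sum>i\<in>UNIV. \<Sum>j\<in>UNIV. ginv g y j i * (pd i A y * g y $ j $ k + pd i B y * u y $ j * u y $ k
       + B y * (cov1 g u i j y * u y $ k + u y $ j * cov1 g u i k y))) = 0"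
      by (subst sum.swap) (simp add: cov2K[OF y])
  qed
qed


lemma Q_zero: "y \<in> U \<Longrightarrow> (\<Sum>k\<in>UNIV. raise g u k y * cov1 g u a k y) = 0"
proof -
  assume y: "y \<in> U"
  define vv where "vv k = raise g u k y" for k
  define uu where "uu k = u y $ k" for k
  define GG where "GG k l = g y $ k $ l" for k l
  define dv where "dv k = pd a (\<lambda>z. raise g u k z) y" for k
  define du where "du k = pd a (\<lambda>z. u z $ k) y" for k
  define dG where "dG k l = pd a (\<lambda>z. g z $ k $ l) y" for k l
  note dd = vdiff[OF y] udiff[OF y] gdiff[OF y]
  have "pd a (\<lambda>z. \<Sum>k\<in>UNIV. raise g u k z * u z $ k) y = pd a (\<lambda>z. -1) y"
    by (rule pd_cong_open[OF openU y]) (rule nrm')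
  also have "\<dots> = 0" by (rule pd_const)
  finally have "pd a (\<lambda>z. \<Sum>k\<in>UNIV. raise g u k z * u z $ k) y = 0" .
  moreover have "pd a (\<lambda>z. \<Sum>k\<in>UNIV. raise g u k z * u z $ k) y = (\<Sum>k\<in>UNIV. pd a (\<lambda>z. raise g u k z * u z $ k) y)"
    by (rule pd_sum) (auto intro: differentiable_mult dd)
  moreover have "pd a (\<lambda>z. raise g u k z * u z $ k) y = vv k * du k + dv k * uu k" for k
    unfolding vv_def du_def dv_def uu_def by (rule pd_mult) (rule dd)+
  ultimately have N: "(\<Sum>k\<in>UNIV. dv k * uu k) = - (\<Sum>k\<in>UNIV. vv k * du k)"
    by (simp add: sum.distrib eq_neg_iff_add_eq_0 add.commute)
  have M1: "(\<Sum>k\<in>UNIV. \<Sum>l\<in>UNIV. g z $ k $ l * raise g u k z * raise g u l z) = -1" if z: "z \<in> U" for z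
  proof -
    have "(\<Sum>k\<in>UNIV. \<Sum>l\<in>UNIV. g z $ k $ l * raise g u k z * raise g u l z)
        = (\<Sum>l\<in>UNIV. (\<Sum>k\<in>UNIV. raise g u k z * g z $ k $ l) * raise g u l z)"
      by (subst sum.swap) (simp add: sum_distrib_right sum_distrib_left algebra_simps)
    also have "\<dots> = (\<Sum>l\<in>UNIV. raise g u l z * u z $ l)" by (simp add: vG[OF z] mult.commute)
    finally show ?thesis using nrm'[OF z] by simp
  qed
  have "pd a (\<lambda>z. \<Sum>k\<in>UNIV. \<Sum>l\<in>UNIV. g z $ k $ l * raise g u k z * raise g u l z) y = pd a (\<lambda>z. -1) y"
    by (rule pd_cong_open[OF openU y]) (rule M1)
  also have "\<dots> = 0" by (rule pd_const)
  finally have "pd a (\<lambda>z. \<Sum>k\<in>UNIV. \<Sum>l\<in>UNIV. g z $ k $ l * raise g u k z * raise g u l z) y = 0" .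
  moreover have "pd a (\<lambda>z. \<Sum>k\<in>UNIV. \<Sum>l\<in>UNIV. g z $ k $ l * raise g u k z * raise g u l z) y
     = (\<Sum>k\<in>UNIV. pd a (\<lambda>z. \<Sum>l\<in>UNIV. g z $ k $ l * raise g u k z * raise g u l z) y)"
    by (rule pd_sum) (auto intro!: differentiable_sum differentiable_mult dd)
  moreover have "pd a (\<lambda>z. \<Sum>l\<in>UNIV. g z $ k $ l * raise g u k z * raise g u l z) y
     = (\<Sum>l\<in>UNIV. pd a (\<lambda>z. g z $ k $ l * raise g u k z * raise g u l z) y)" for k
    by (rule pd_sum) (auto intro!: differentiable_mult dd)
  moreover have "pd a (\<lambda>z. g z $ k $ l * raise g u k z * raise g u l z) y
     = GG k l * vv k * dv l + (GG k l * dv k + dG k l * vv k) * vv l" for k l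
  proof -
    have "pd a (\<lambda>z. g z $ k $ l * raise g u k z * raise g u l z) y
       = (GG k l * vv k) * dv l + pd a (\<lambda>z. g z $ k $ l * raise g u k z) y * vv l"
      unfolding GG_def vv_def dv_def by (rule pd_mult) (auto intro!: differentiable_mult dd)
    moreover have "pd a (\<lambda>z. g z $ k $ l * raise g u k z) y = GG k l * dv k + dG k l * vv k"
      unfolding GG_def vv_def dv_def dG_def by (rule pd_mult) (rule dd)+
    ultimately show ?thesis by simp
  qed
  ultimately have M0: "(\<Sum>k\<in>UNIV. \<Sum>l\<in>UNIV. GG k l * vv k * dv l + (GG k l * dv k + dG k l * vv k) * vv l) = 0"
    by simp
  have "(\<Sum>k\<in>UNIV. \<Sum>l\<in>UNIV. GG k l * vv k * dv l + (GG k l * dv k + dG k l * vv k) * vv l)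
     = (\<Sum>l\<in>UNIV. (\<Sum>k\<in>UNIV. vv k * GG k l) * dv l) + (\<Sum>k\<in>UNIV. dv k * (\<Sum>l\<in>UNIV. vv l * GG k l))
       + (\<Sum>k\<in>UNIV. \<Sum>l\<in>UNIV. dG k l * vv k * vv l)"
  proof -
    have "(\<Sum>k\<in>UNIV. \<Sum>l\<in>UNIV. GG k l * vv k * dv l) = (\<Sum>l\<in>UNIV. (\<Sum>k\<in>UNIV. vv k * GG k l) * dv l)"
      by (subst sum.swap) (simp add: sum_distrib_right sum_distrib_left algebra_simps)
    moreover have "(\<Sum>k\<in>UNIV. \<Sum>l\<in>UNIV. GG k l * dv k * vv l) = (\<Sum>k\<in>UNIV. dv k * (\<Sum>l\<in>UNIV. vv l * GG k l))"
      by (simp add: sum_distrib_left algebra_simps)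
    ultimately show ?thesis by (simp add: sum.distrib algebra_simps)
  qed
  moreover have "(\<Sum>k\<in>UNIV. vv k * GG k l) = uu l" for l unfolding vv_def GG_def uu_def by (rule vG[OF y])
  moreover have "(\<Sum>l\<in>UNIV. vv l * GG k l) = uu k" for k unfolding vv_def GG_def uu_def by (rule vG'[OF y])
  ultimately have M: "(\<Sum>k\<in>UNIV. \<Sum>l\<in>UNIV. dG k l * vv k * vv l) = 2 * (\<Sum>k\<in>UNIV. vv k * du k)"
    using M0 N by (simp add: mult.commute)
  have L: "(\<Sum>l\<in>UNIV. christoffel g l a k y * uu l)
      = (\<Sum>m\<in>UNIV. vv m * ((1/2) * (dG k m + pd k (\<lambda>z. g z $ a $ m) y - pd m (\<lambda>z. g z $ a $ k) y)))" for k
  proof -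
    have "(\<Sum>l\<in>UNIV. christoffel g l a k y * uu l) = (\<Sum>l\<in>UNIV. christoffel g l a k y * (\<Sum>m\<in>UNIV. vv m * GG l m))"
      using vG'[OF y] unfolding vv_def GG_def uu_def by simp
    also have "\<dots> = (\<Sum>m\<in>UNIV. vv m * (\<Sum>l\<in>UNIV. christoffel g l a k y * GG l m))"
      by (simp add: sum_distrib_left sum_distrib_right algebra_simps) (subst sum.swap, simp)
    also have "\<dots> = (\<Sum>m\<in>UNIV. vv m * ((1/2) * (dG k m + pd k (\<lambda>z. g z $ a $ m) y - pd m (\<lambda>z. g z $ a $ k) y)))"
      unfolding GG_def dG_def by (simp add: lower[OF y])
    finally show ?thesis .
  qed
  have S: "(\<Sum>k\<in>UNIV. \<Sum>m\<in>UNIV. vv k * vv m * pd k (\<lambda>z. g z $ a $ m) y)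
         = (\<Sum>k\<in>UNIV. \<Sum>m\<in>UNIV. vv k * vv m * pd m (\<lambda>z. g z $ a $ k) y)"
    by (subst sum.swap) (simp add: mult.commute)
  have "(\<Sum>k\<in>UNIV. raise g u k y * cov1 g u a k y)
      = (\<Sum>k\<in>UNIV. vv k * du k) - (\<Sum>k\<in>UNIV. vv k * (\<Sum>l\<in>UNIV. christoffel g l a k y * uu l))"
    unfolding cov1_def vv_def du_def uu_def by (simp add: algebra_simps sum_subtractf)
  also have "(\<Sum>k\<in>UNIV. vv k * (\<Sum>l\<in>UNIV. christoffel g l a k y * uu l))
     = (1/2) * (\<Sum>k\<in>UNIV. \<Sum>m\<in>UNIV. dG k m * vv k * vv m)
       + (1/2) * ((\<Sum>k\<in>UNIV. \<Sum>m\<in>UNIV. vv k * vv m * pd k (\<lambda>z. g z $ a $ m) y)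
         - (\<Sum>k\<in>UNIV. \<Sum>m\<in>UNIV. vv k * vv m * pd m (\<lambda>z. g z $ a $ k) y))"
    unfolding L by (simp add: algebra_simps sum.distrib sum_distrib_left sum_subtractf)
  finally show ?thesis using M S by simp
qed


lemma pointwise:
  assumes y: "y \<in> U"
  shows "\<And>k. pd k B y = - dotd g u B y * u y $ k"
    and "\<And>j l. B y * (cov1 g u j l y + cov1 g u l j y) = dotd g u B y * (g y $ j $ l + u y $ j * u y $ l)"
proof -
  have dd: "dotd g u B y = (\<Sum>m\<in>UNIV. raise g u m y * pd m B y)" unfolding dotd_def ..
  have CK': "(pd i A y * g y $ j $ l + pd i B y * u y $ j * u y $ l + B y * (cov1 g u i j y * u y $ l + u y $ j * cov1 g u i l y)) +
      (pd j A y * g y $ l $ i + pd j B y * u y $ l * u y $ i + B y * (cov1 g u j l y * u y $ i + u y $ l * cov1 g u j i y)) +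
      (pd l A y * g y $ i $ j + pd l B y * u y $ i * u y $ j + B y * (cov1 g u l i y * u y $ j + u y $ i * cov1 g u l j y))
      = (real CARD('n) * pd i A y - pd i B y) / (real CARD('n) + 2) * g y $ j $ l
        + (real CARD('n) * pd j A y - pd j B y) / (real CARD('n) + 2) * g y $ l $ i
        + (real CARD('n) * pd l A y - pd l B y) / (real CARD('n) + 2) * g y $ i $ j" for i j l
  proof -
    have "cov2 g KK i j l y + cov2 g KK j l i y + cov2 g KK l i j y =
          eta g KK i y * g y $ j $ l + eta g KK j y * g y $ l $ i + eta g KK l y * g y $ i $ j"
      using CK y unfolding conformal_killing_def by blast
    then show ?thesis unfolding cov2K[OF y] eta_eq[OF y] .
  qed
  note am = algebra_main[where G = "\<lambda>a b. g y $ a $ b" and C = "\<lambda>a b. cov1 g u a b y" and u = "\<lambda>a. u y $ a"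
      and v = "\<lambda>a. raise g u a y" and \<alpha> = "\<lambda>a. pd a A y" and \<beta> = "\<lambda>a. pd a B y" and b = "B y"
      and n = "real CARD('n)"
      and s = "- ((\<Sum>i\<in>UNIV. raise g u i y * pd i B y) + B y * (\<Sum>i\<in>UNIV. \<Sum>j\<in>UNIV. ginv g y j i * cov1 g u i j y))",
      OF vG[OF y] gsym[OF y] nrm'[OF y] _ Q_zero[OF y] alpha_u[OF y] of_nat_0_le_iff CK']
  have accy: "\<And>j. (\<Sum>k\<in>UNIV. raise g u k y * cov1 g u k j y) = 0"
    using acc y unfolding accel_def by blast
  show "\<And>k. pd k B y = - dotd g u B y * u y $ k" unfolding dd by (rule am(1)[OF accy])
  show "\<And>j l. B y * (cov1 g u j l y + cov1 g u l j y) = dotd g u B y * (g y $ j $ l + u y $ j * u y $ l)"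
    unfolding dd by (rule am(2)[OF accy])
qed


lemma Ddiff: "y \<in> U \<Longrightarrow> (\<lambda>z. dotd g u B z) differentiable (at y)"
  unfolding dotd_def by (intro differentiable_sum ballI differentiable_mult vdiff Bdiff1) auto

lemma final_at:
  assumes x: "x \<in> U"
  shows "\<forall>j k. cov1 g u j k x = dotd g u B x / (2 * B x) * (g x $ j $ k + u x $ j * u x $ k)"
    and "\<forall>j. pd j (\<lambda>x. dotd g u B x / (2 * B x)) x = - dotd g u (\<lambda>x. dotd g u B x / (2 * B x)) x * u x $ j"
proof -
  define D where "D z = dotd g u B z" for z
  have Dd: "(\<lambda>z. D z) differentiable (at x)" unfolding D_def by (rule Ddiff[OF x])
  have Dnz: "D x \<noteq> 0" using Bdot x unfolding D_def by blast
  have Bnzx: "B x \<noteq> 0" using Bnz x by blast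
  define E where "E i = pd i D x" for i
  define C where "C i j = cov1 g u i j x" for i j
  define GU where "GU i j = (\<Sum>l\<in>UNIV. christoffel g l i j x * u x $ l)" for i j
  have GUs: "GU i j = GU j i" for i j unfolding GU_def using chrsym[OF x] by simp
  have pdu: "pd i (\<lambda>z. u z $ j) x = C i j + GU i j" for i j unfolding C_def GU_def cov1_def by simp
  have hess: "pd i (pd j B) x = - D x * pd i (\<lambda>z. u z $ j) x - E i * u x $ j" for i j
  proof -
    have "pd i (pd j B) x = pd i (\<lambda>z. (- D z) * u z $ j) x"
      by (rule pd_cong_open[OF openU x]) (simp add: pointwise(1) D_def)
    also have "\<dots> = (- D x) * pd i (\<lambda>z. u z $ j) x + pd i (\<lambda>z. - D z) x * u x $ j"
      by (rule pd_mult) (intro differentiable_minus Dd udiff x)+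
    also have "pd i (\<lambda>z. - D z) x = - E i" unfolding E_def by (rule pd_uminus[OF Dd])
    finally show ?thesis by simp
  qed
  have sw: "pd j (pd i B) x = pd i (pd j B) x" for i j
  proof (rule schwarz[OF openU x])
    show "\<forall>y\<in>U. B differentiable (at y)" using Bdiff by blast
    show "\<forall>y\<in>U. pd i B differentiable (at y)" using Bdiff1 by blast
    show "\<forall>y\<in>U. pd j B differentiable (at y)" using Bdiff1 by blast
    show "continuous (at x) (pd j (pd i B))" by (rule differentiable_imp_continuous_within[OF Bdiff2[OF x]])
    show "continuous (at x) (pd i (pd j B))" by (rule differentiable_imp_continuous_within[OF Bdiff2[OF x]])
  qed
  have sym: "E i * u x $ j + D x * C i j = E j * u x $ i + D x * C j i" for i j
    using sw[of i j] hess[of i j] hess[of j i] pdu[of i j] pdu[of j i] GUs[of i j]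
    by (simp add: algebra_simps)
  have acc': "\<And>j. (\<Sum>k\<in>UNIV. raise g u k x * C k j) = 0"
    using acc x unfolding accel_def C_def by blast
  have Q': "\<And>i. (\<Sum>k\<in>UNIV. raise g u k x * C i k) = 0"
    using Q_zero[OF x] unfolding C_def by blast
  note ha = hess_algebra[where u = "\<lambda>a. u x $ a" and v = "\<lambda>a. raise g u a x", OF nrm'[OF x] acc' Q' sym Dnz]
  show "\<forall>j k. cov1 g u j k x = dotd g u B x / (2 * B x) * (g x $ j $ k + u x $ j * u x $ k)"
  proof (intro allI)
    fix j k
    have "B x * (C j k + C k j) = D x * (g x $ j $ k + u x $ j * u x $ k)"
      using pointwise(2)[OF x, of j k] unfolding C_def D_def .
    then have "2 * B x * C j k = D x * (g x $ j $ k + u x $ j * u x $ k)"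
      using ha(2)[of j k] by simp
    then show "cov1 g u j k x = dotd g u B x / (2 * B x) * (g x $ j $ k + u x $ j * u x $ k)"
      using Bnzx unfolding C_def D_def by (simp add: field_simps)
  qed
  define e where "e = - (\<Sum>k\<in>UNIV. raise g u k x * E k)"
  define c where "c = (e * (2 * B x) + 2 * D x * D x) / (2 * B x * (2 * B x))"
  have pdH: "pd k (\<lambda>x. dotd g u B x / (2 * B x)) x = c * u x $ k" for k
  proof -
    have d2B: "(\<lambda>z. 2 * B z) differentiable (at x)" by (intro differentiable_mult differentiable_const Bdiff x)
    have p2B: "pd k (\<lambda>z. 2 * B z) x = 2 * pd k B x"
      using pd_mult[OF differentiable_const[of 2] Bdiff[OF x], where i=k] by (simp add: pd_const)
    have "pd k (\<lambda>x. dotd g u B x / (2 * B x)) x = pd k (\<lambda>z. D z / (2 * B z)) x" unfolding D_def ..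
    also have "\<dots> = (pd k D x * (2 * B x) - D x * pd k (\<lambda>z. 2 * B z) x) / (2 * B x * (2 * B x))"
      by (rule pd_divide[OF Dd d2B]) (simp add: Bnzx)
    also have "\<dots> = c * u x $ k"
      using ha(1)[of k] p2B pointwise(1)[OF x, of k] unfolding c_def e_def E_def D_def
      by (simp add: field_simps)
    finally show ?thesis .
  qed
  have "dotd g u (\<lambda>x. dotd g u B x / (2 * B x)) x = (\<Sum>k\<in>UNIV. raise g u k x * (c * u x $ k))"
    unfolding dotd_def[of g u "\<lambda>x. dotd g u B x / (2 * B x)"] by (simp only: pdH)
  also have "\<dots> = c * (\<Sum>k\<in>UNIV. raise g u k x * u x $ k)" by (simp add: sum_distrib_left algebra_simps)
  also have "\<dots> = - c" using nrm'[OF x] by simp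
  finally show "\<forall>j. pd j (\<lambda>x. dotd g u B x / (2 * B x)) x = - dotd g u (\<lambda>x. dotd g u B x / (2 * B x)) x * u x $ j"
    using pdH by simp
qed

end

theorem proposition2:
  fixes U :: "(real^'n::finite) set"
    and g :: "real^'n \<Rightarrow> real^'n^'n"
    and A B :: "real^'n \<Rightarrow> real"
    and u :: "real^'n \<Rightarrow> real^'n"
  assumes "open U"
    and "lorentzian_metric U g"
    and "smooth_on U A" and "smooth_on U B" and "\<forall>k. smooth_on U (\<lambda>x. u x $ k)"
    and "\<forall>x\<in>U. (\<Sum>i\<in>UNIV. \<Sum>j\<in>UNIV. ginv g x i j * u x $ i * u x $ j) = -1"
    and "\<forall>x\<in>U. B x \<noteq> 0"
    and "conformal_killing U g (\<lambda>x i j. A x * g x $ i $ j + B x * u x $ i * u x $ j)"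
    and "divergence_free U g (\<lambda>x i j. A x * g x $ i $ j + B x * u x $ i * u x $ j)"
    and "\<forall>x\<in>U. \<forall>j. accel g u j x = 0"
    and "\<forall>x\<in>U. dotd g u B x \<noteq> 0"
  shows "let H = (\<lambda>x. dotd g u B x / (2 * B x)) in
         \<forall>x\<in>U. (\<forall>j k. cov1 g u j k x = H x * (g x $ j $ k + u x $ j * u x $ k))
              \<and> (\<forall>j. pd j H x = - dotd g u H x * u x $ j)"
  proof -
  interpret CKS U g A B u by (rule CKS.intro) (rule assms)+
  show ?thesis unfolding Let_def using final_at by blast
qed

end
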